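(* Let $(\underline F_X,\overline F_X)$ and $(\underline F_Y,\overline F_Y)$ be $p$-boxes, $F_Z$ a distribution function, and let $F_X,F_Y$ be distribution functions with $\underline F_X\le F_X\le\overline F_X$, $\underline F_Y\le F_Y\le\overline F_Y$. Put $F=F_XF_Z$, $G=F_YF_Z$, $K=F_Y+F_Z-F_YF_Z$ and $\underline F=\underline F_XF_Z$, $\overline F=\overline F_XF_Z$, $\underline G=\underline F_YF_Z$, $\overline G=\overline F_YF_Z$, $\underline K=\underline F_Y+F_Z-\underline F_YF_Z$, $\overline K=\overline F_Y+F_Z-\overline F_YF_Z$. Let $\underline\phi,\underline\psi,\underline\chi$ be the pointwise infima of the functions $\phi$, $\psi$, $\chi$ (respectively) associated to $(\underline F_X,\underline F_Y,F_Z)$, and $\overline\phi,\overline\psi,\overline\chi$ the pointwise suprema of those associated to $(\overline F_X,\overline F_Y,F_Z)$. Then: (i) $\underline F\le F\le\overline F$, $\underline G\le G\le\overline G$, $\underline K\le K\le\overline K$; (ii) there exist $\phi,\psi,\chi:[0,1]\to[0,1]$ associated to $(F_X,F_Y,F_Z)$ (i.e. to $F$, $G$, $K$) with $\underline\phi\le\phi\le\overline\phi$, $\underline\psi\le\psi\le\overline\psi$, $\underline\chi\le\chi\le\overline\chi$.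
   Context: A distribution function is a non-decreasing map $\mathbb R\to[0,1]$ (no continuity assumed) with limits $0$ at $-\infty$ and $1$ at $+\infty$; a $p$-box is a pair of distribution functions $(\underline F,\overline F)$ with $\underline F\le\overline F$. For distribution functions $(A,B,C)$ (playing the roles of $F_X,F_Y,F_Z$): $\phi$ is associated if $\phi$ is non-decreasing, $\phi(0)=0$, $\phi(1)=1$, $\phi(u)/u$ non-increasing on $(0,1]$, and $\phi(A(x)C(x))=A(x)$ whenever $A(x)C(x)>0$; $\psi$ is associated if it satisfies the same conditions with $B$ in place of $A$; $\chi$ is associated if $\chi$ is non-decreasing, $\chi(0)=0$, $\chi(1)=1$, $\frac{1-\chi(w)}{w-\chi(w)}$ non-increasing on $[0,1]$ (values in $[1,\infty]$), and $\chi(B(y)+C(y)-B(y)C(y))=B(y)$ whenever $B(y)+C(y)-B(y)C(y)<1$. *)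

theory Defs
  imports Complex_Main "HOL-Library.Extended_Real"
begin

definition distribution_function :: "(real \<Rightarrow> real) \<Rightarrow> bool" where
  "distribution_function F \<longleftrightarrow>
     mono F \<and> (\<forall>x. 0 \<le> F x \<and> F x \<le> 1) \<and>
     (F \<longlongrightarrow> 0) at_bot \<and> (F \<longlongrightarrow> 1) at_top"

definition pbox :: "(real \<Rightarrow> real) \<Rightarrow> (real \<Rightarrow> real) \<Rightarrow> bool" where
  "pbox Fl Fu \<longleftrightarrow> distribution_function Fl \<and> distribution_function Fu \<and> (\<forall>x. Fl x \<le> Fu x)"

text \<open>phi associated to (A, _, C) (and psi associated to (_, B, C), with B for A):
  a map [0,1] -> [0,1], non-decreasing, phi 0 = 0, phi 1 = 1, phi u / u non-increasing
  on (0,1], and phi (A x * C x) = A x whenever A x * C x > 0.\<close>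
definition assoc_phi :: "(real \<Rightarrow> real) \<Rightarrow> (real \<Rightarrow> real) \<Rightarrow> (real \<Rightarrow> real) \<Rightarrow> bool" where
  "assoc_phi A C \<phi> \<longleftrightarrow>
     \<phi> ` {0..1} \<subseteq> {0..1} \<and>
     mono_on {0..1} \<phi> \<and> \<phi> 0 = 0 \<and> \<phi> 1 = 1 \<and>
     (\<forall>u\<in>{0<..1}. \<forall>v\<in>{0<..1}. u \<le> v \<longrightarrow> \<phi> v / v \<le> \<phi> u / u) \<and>
     (\<forall>x. A x * C x > 0 \<longrightarrow> \<phi> (A x * C x) = A x)"

text \<open>The quotient (1 - chi w)/(w - chi w) as an extended real: a zero denominator with
  positive numerator gives \<infinity>; the indeterminate 0/0 (which only happens at w = 1, where
  chi 1 = 1) is given the value 1, the least admissible value, so it imposes no constraint.\<close>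
definition chi_ratio :: "(real \<Rightarrow> real) \<Rightarrow> real \<Rightarrow> ereal" where
  "chi_ratio \<chi> w =
     (if w - \<chi> w = 0 then (if 1 - \<chi> w = 0 then 1 else \<infinity>)
      else ereal ((1 - \<chi> w) / (w - \<chi> w)))"

definition assoc_chi :: "(real \<Rightarrow> real) \<Rightarrow> (real \<Rightarrow> real) \<Rightarrow> (real \<Rightarrow> real) \<Rightarrow> bool" where
  "assoc_chi B C \<chi> \<longleftrightarrow>
     \<chi> ` {0..1} \<subseteq> {0..1} \<and>
     mono_on {0..1} \<chi> \<and> \<chi> 0 = 0 \<and> \<chi> 1 = 1 \<and>
     (\<forall>w\<in>{0..1}. 1 \<le> chi_ratio \<chi> w) \<and>
     (\<forall>u\<in>{0..1}. \<forall>v\<in>{0..1}. u \<le> v \<longrightarrow> chi_ratio \<chi> v \<le> chi_ratio \<chi> u) \<and>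
     (\<forall>y. B y + C y - B y * C y < 1 \<longrightarrow> \<chi> (B y + C y - B y * C y) = B y)"

end

theory Submission
  imports Defs
begin

definition Mf :: "(real \<Rightarrow> real) \<Rightarrow> (real \<Rightarrow> real) \<Rightarrow> real \<Rightarrow> real" where
  "Mf A C u = Sup (insert u ((\<lambda>x. min (A x) (u / C x)) ` {x. A x * C x > 0}))"

definition Xf :: "(real \<Rightarrow> real) \<Rightarrow> (real \<Rightarrow> real) \<Rightarrow> real \<Rightarrow> real" where
  "Xf B C w = 1 - Mf (\<lambda>y. 1 - B y) (\<lambda>y. 1 - C y) (1 - w)"

definition good :: "(real \<Rightarrow> real) \<Rightarrow> (real \<Rightarrow> real) \<Rightarrow> bool" where
  "good A C \<longleftrightarrow> (\<forall>x. 0 \<le> A x \<and> A x \<le> 1 \<and> 0 \<le> C x \<and> C x \<le> 1) \<and>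
     (\<forall>x y. (A x \<le> A y \<and> C x \<le> C y) \<or> (A y \<le> A x \<and> C y \<le> C x))"

lemma good_C_pos: "good A C \<Longrightarrow> A x * C x > 0 \<Longrightarrow> C x > 0"
  unfolding good_def by (metis less_eq_real_def mult_zero_right)

lemma M_bdd: "good A C \<Longrightarrow> u \<le> 1 \<Longrightarrow>
   bdd_above ((\<lambda>x. min (A x) (u / C x)) ` {x. A x * C x > 0})"
  unfolding good_def bdd_above_def
  by (rule exI[of _ 1]) (auto simp: min_le_iff_disj)

lemma M_ge: "good A C \<Longrightarrow> u \<le> 1 \<Longrightarrow> u \<le> Mf A C u"
  unfolding Mf_def by (rule cSup_upper) (auto simp: M_bdd)

lemma M_upper: "good A C \<Longrightarrow> u \<le> 1 \<Longrightarrow> A x * C x > 0 \<Longrightarrow> min (A x) (u / C x) \<le> Mf A C u"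
  unfolding Mf_def by (rule cSup_upper) (auto simp: M_bdd)

lemma M_least: "u \<le> b \<Longrightarrow> (\<And>x. A x * C x > 0 \<Longrightarrow> min (A x) (u / C x) \<le> b) \<Longrightarrow> Mf A C u \<le> b"
  unfolding Mf_def by (rule cSup_least) auto

lemma M_le1: "good A C \<Longrightarrow> u \<le> 1 \<Longrightarrow> Mf A C u \<le> 1"
  by (rule M_least) (auto simp: good_def min_le_iff_disj)

lemma M_0: "good A C \<Longrightarrow> Mf A C 0 = 0"
  using M_ge[of A C 0] M_least[of 0 0 A C] by (auto simp: min_le_iff_disj)

lemma M_1: "good A C \<Longrightarrow> Mf A C 1 = 1"
  using M_ge[of A C 1] M_le1[of A C 1] by auto

lemma M_mono: "good A C \<Longrightarrow> u \<le> v \<Longrightarrow> v \<le> 1 \<Longrightarrow> Mf A C u \<le> Mf A C v"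
proof (rule M_least)
  assume g: "good A C" and uv: "u \<le> v" "v \<le> 1"
  show "u \<le> Mf A C v" using M_ge[OF g uv(2)] uv by linarith
  fix x assume p: "A x * C x > 0"
  have "C x > 0" using good_C_pos[OF g p] .
  then have "u / C x \<le> v / C x" using uv by (simp add: divide_right_mono)
  then have "min (A x) (u / C x) \<le> min (A x) (v / C x)" by auto
  also have "\<dots> \<le> Mf A C v" using M_upper[OF g uv(2) p] .
  finally show "min (A x) (u / C x) \<le> Mf A C v" .
qed

lemma M_ratio: "good A C \<Longrightarrow> 0 < u \<Longrightarrow> u \<le> v \<Longrightarrow> v \<le> 1 \<Longrightarrow> Mf A C v / v \<le> Mf A C u / u"
proof -
  assume g: "good A C" and uv: "0 < u" "u \<le> v" "v \<le> 1"
  have ge: "u \<le> Mf A C u" using M_ge[OF g] uv by auto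
  have "Mf A C v \<le> v * (Mf A C u / u)"
  proof (rule M_least)
    have "1 \<le> Mf A C u / u" using ge uv by simp
    then show "v \<le> v * (Mf A C u / u)" using mult_left_mono[of 1 "Mf A C u / u" v] uv by simp
    fix x assume p: "A x * C x > 0"
    have c: "C x > 0" using good_C_pos[OF g p] .
    have m: "min (A x) (u / C x) \<le> Mf A C u" using M_upper[OF g _ p] uv by auto
    have a: "A x \<ge> 0" using g unfolding good_def by auto
    have "min (A x) (v / C x) \<le> (v / u) * min (A x) (u / C x)"
    proof (cases "A x \<le> u / C x")
      case True
      then have "min (A x) (u / C x) = A x" by auto
      moreover have "1 \<le> v / u" using uv by simp
      then have "A x \<le> (v/u) * A x" using mult_right_mono[of 1 "v/u" "A x"] a by simp
      ultimately show ?thesis by auto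
    next
      case False
      then have "min (A x) (u / C x) = u / C x" by auto
      moreover have "(v/u) * (u / C x) = v / C x" using uv by simp
      ultimately show ?thesis by auto
    qed
    also have "\<dots> \<le> (v / u) * Mf A C u" using m uv mult_left_mono[of _ _ "v/u"] by simp
    finally show "min (A x) (v / C x) \<le> v * (Mf A C u / u)" by simp
  qed
  moreover have "v > 0" using uv by simp
  ultimately show ?thesis by (simp add: pos_divide_le_eq mult.commute)
qed

lemma M_point: "good A C \<Longrightarrow> A y * C y > 0 \<Longrightarrow> Mf A C (A y * C y) = A y"
proof -
  assume g: "good A C" and p: "A y * C y > 0"
  have c: "C y > 0" using good_C_pos[OF g p] .
  have b: "0 \<le> A y" "A y \<le> 1" "C y \<le> 1" using g unfolding good_def by auto
  have t1: "A y * C y \<le> 1" using b c by (simp add: mult_le_one)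
  have "min (A y) (A y * C y / C y) \<le> Mf A C (A y * C y)" using M_upper[OF g t1 p] .
  then have 1: "A y \<le> Mf A C (A y * C y)" using c by simp
  have 2: "Mf A C (A y * C y) \<le> A y"
  proof (rule M_least)
    show "A y * C y \<le> A y" using b by (simp add: mult_left_le)
    fix x assume px: "A x * C x > 0"
    have cx: "C x > 0" using good_C_pos[OF g px] .
    from g have "(A x \<le> A y \<and> C x \<le> C y) \<or> (A y \<le> A x \<and> C y \<le> C x)" unfolding good_def by blast
    then show "min (A x) (A y * C y / C x) \<le> A y"
    proof
      assume "A x \<le> A y \<and> C x \<le> C y" then show ?thesis by auto
    next
      assume h: "A y \<le> A x \<and> C y \<le> C x"
      have "A y * C y \<le> A y * C x" using h b by (simp add: mult_left_mono)
      then have "A y * C y / C x \<le> A y" using cx by (simp add: divide_le_eq)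
      then show ?thesis by auto
    qed
  qed
  from 1 2 show ?thesis by auto
qed

lemma M_monoA: "good A C \<Longrightarrow> good A' C \<Longrightarrow> (\<forall>x. A x \<le> A' x) \<Longrightarrow> 0 \<le> u \<Longrightarrow> u \<le> 1 \<Longrightarrow>
   Mf A C u \<le> Mf A' C u"
proof (rule M_least)
  assume g: "good A C" and g': "good A' C" and le: "\<forall>x. A x \<le> A' x" and u: "0 \<le> u" "u \<le> 1"
  show "u \<le> Mf A' C u" using M_ge[OF g' u(2)] .
  fix x assume p: "A x * C x > 0"
  have c: "C x > 0" using good_C_pos[OF g p] .
  have "A x > 0" using p c by (simp add: zero_less_mult_iff)
  then have p': "A' x * C x > 0" using le c by (metis mult_pos_pos order_less_le_trans)
  have "min (A x) (u / C x) \<le> min (A' x) (u / C x)" using le by (meson min.mono order_refl)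
  also have "\<dots> \<le> Mf A' C u" using M_upper[OF g' u(2) p'] .
  finally show "min (A x) (u / C x) \<le> Mf A' C u" .
qed

lemma M_range: "good A C \<Longrightarrow> u \<in> {0..1} \<Longrightarrow> Mf A C u \<in> {0..1}"
  using M_ge[of A C u] M_le1[of A C u] by auto

lemma df_good: "distribution_function A \<Longrightarrow> distribution_function C \<Longrightarrow> good A C"
  unfolding distribution_function_def good_def
  by (metis linear monoD)

lemma df_good': "distribution_function A \<Longrightarrow> distribution_function C \<Longrightarrow>
   good (\<lambda>y. 1 - A y) (\<lambda>y. 1 - C y)"
proof -
  assume a: "distribution_function A" "distribution_function C"
  then have m: "mono A" "mono C" and b: "\<forall>x. 0 \<le> A x \<and> A x \<le> 1" "\<forall>x. 0 \<le> C x \<and> C x \<le> 1"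
    unfolding distribution_function_def by auto
  have o: "(1 - A x \<le> 1 - A y \<and> 1 - C x \<le> 1 - C y) \<or> (1 - A y \<le> 1 - A x \<and> 1 - C y \<le> 1 - C x)" for x y
  proof (cases "x \<le> y")
    case True
    then have "A x \<le> A y" "C x \<le> C y" using m monoD by blast+
    then show ?thesis by linarith
  next
    case False
    then have "A y \<le> A x" "C y \<le> C x" using m monoD[of _ y x] by auto
    then show ?thesis by linarith
  qed
  have b2: "\<forall>x. 0 \<le> 1 - A x \<and> 1 - A x \<le> 1 \<and> 0 \<le> 1 - C x \<and> 1 - C x \<le> 1" using b by auto
  show ?thesis unfolding good_def using o b2 by blast
qed

lemma assoc_phi_M: "distribution_function A \<Longrightarrow> distribution_function C \<Longrightarrow> assoc_phi A C (Mf A C)"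
proof -
  assume a: "distribution_function A" "distribution_function C"
  have g: "good A C" using df_good[OF a] .
  show ?thesis unfolding assoc_phi_def
  proof (intro conjI ballI allI impI)
    show "Mf A C ` {0..1} \<subseteq> {0..1}" using M_range[OF g] by auto
    show "mono_on {0..1} (Mf A C)" by (rule mono_onI) (use M_mono[OF g] in auto)
    show "Mf A C 0 = 0" using M_0[OF g] .
    show "Mf A C 1 = 1" using M_1[OF g] .
    fix u v :: real assume "u \<in> {0<..1}" "v \<in> {0<..1}" "u \<le> v"
    then show "Mf A C v / v \<le> Mf A C u / u" using M_ratio[OF g] by auto
  next
    fix x assume "A x * C x > 0" then show "Mf A C (A x * C x) = A x" using M_point[OF g] by auto
  qed
qed

lemma ratio_mono:
  fixes P :: "real \<Rightarrow> real"
  assumes ge: "\<And>s. s \<in> {0..1} \<Longrightarrow> s \<le> P s"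
    and P0: "P 0 = 0"
    and rat: "\<And>s t. 0 < s \<Longrightarrow> s \<le> t \<Longrightarrow> t \<le> 1 \<Longrightarrow> P t / t \<le> P s / s"
    and st: "0 \<le> s" "s \<le> t" "t \<le> 1"
  shows "(if P s - s = 0 then (if P s = 0 then 1 else \<infinity>) else ereal (P s / (P s - s)))
       \<le> (if P t - t = 0 then (if P t = 0 then 1 else \<infinity>) else ereal (P t / (P t - t)))"
proof (cases "s = 0")
  case True
  have "P t \<ge> t" using ge st by auto
  then have "1 \<le> (if P t - t = 0 then (if P t = 0 then 1 else \<infinity>) else ereal (P t / (P t - t)))"
    using st by (auto simp: le_divide_eq)
  then show ?thesis using True P0 by simp
next
  case False
  then have s0: "s > 0" using st by auto
  have gs: "s \<le> P s" and gt: "t \<le> P t" using ge st by auto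
  have r: "P t / t \<le> P s / s" using rat s0 st by auto
  show ?thesis
  proof (cases "P t = t")
    case True
    then show ?thesis using s0 st by auto
  next
    case False
    then have gt': "P t > t" using gt by auto
    show ?thesis
    proof (cases "P s = s")
      case True
      then have "P t / t \<le> 1" using r s0 by simp
      then have "P t \<le> t" using s0 st by (simp add: divide_le_eq)
      then show ?thesis using gt' by auto
    next
      case False
      then have gs': "P s > s" using gs by auto
      have t0: "t > 0" using s0 st by auto
      have r2: "P t * s \<le> P s * t" using r s0 t0 by (simp add: field_simps)
      have d1: "P s - s > 0" and d2: "P t - t > 0" using gs' gt' by auto
      have "P s * (P t - t) \<le> P t * (P s - s)" using r2 by (simp add: algebra_simps)
      then have "P s / (P s - s) \<le> P t / (P t - t)"
        using d1 d2 by (simp add: divide_le_eq le_divide_eq mult.commute)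
      then show ?thesis using gs' gt' by auto
    qed
  qed
qed

lemma chi_ratio_X: "w \<in> {0..1} \<Longrightarrow> chi_ratio (\<lambda>w. 1 - P (1 - w)) w =
   (if P (1-w) - (1-w) = 0 then (if P (1-w) = 0 then 1 else \<infinity>) else ereal (P (1-w) / (P (1-w) - (1-w))))"
  unfolding chi_ratio_def by (auto simp: algebra_simps)

lemma assoc_chi_X: "distribution_function B \<Longrightarrow> distribution_function C \<Longrightarrow> assoc_chi B C (Xf B C)"
proof -
  assume a: "distribution_function B" "distribution_function C"
  define A' where "A' = (\<lambda>y. 1 - B y)"
  define C' where "C' = (\<lambda>y. 1 - C y)"
  have g: "good A' C'" unfolding A'_def C'_def using df_good'[OF a] .
  define P where "P = Mf A' C'"
  have X: "Xf B C = (\<lambda>w. 1 - P (1 - w))" unfolding Xf_def P_def A'_def C'_def by auto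
  have ge: "\<And>s. s \<in> {0..1} \<Longrightarrow> s \<le> P s" unfolding P_def using M_ge[OF g] by auto
  have P0: "P 0 = 0" unfolding P_def using M_0[OF g] .
  have rat: "\<And>s t. 0 < s \<Longrightarrow> s \<le> t \<Longrightarrow> t \<le> 1 \<Longrightarrow> P t / t \<le> P s / s"
    unfolding P_def using M_ratio[OF g] by auto
  show ?thesis unfolding assoc_chi_def X
  proof (intro conjI ballI allI impI)
    show "(\<lambda>w. 1 - P (1 - w)) ` {0..1} \<subseteq> {0..1}" using M_range[OF g] unfolding P_def by force
    show "mono_on {0..1} (\<lambda>w. 1 - P (1 - w))"
      by (rule mono_onI) (use M_mono[OF g] in \<open>auto simp: P_def\<close>)
    show "1 - P (1 - 0) = 0" using M_1[OF g] unfolding P_def by simp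
    show "1 - P (1 - 1) = 1" using P0 by simp
  next
    fix w :: real assume w: "w \<in> {0..1}"
    have "1 \<le> (if P (1-w) - (1-w) = 0 then (if P (1-w) = 0 then 1 else \<infinity>) else ereal (P (1-w) / (P (1-w) - (1-w))))"
      using ge[of "1-w"] w by (auto simp: le_divide_eq)
    then show "1 \<le> chi_ratio (\<lambda>w. 1 - P (1 - w)) w" using chi_ratio_X[OF w] by simp
  next
    fix u v :: real assume u: "u \<in> {0..1}" and v: "v \<in> {0..1}" and uv: "u \<le> v"
    show "chi_ratio (\<lambda>w. 1 - P (1 - w)) v \<le> chi_ratio (\<lambda>w. 1 - P (1 - w)) u"
      unfolding chi_ratio_X[OF u] chi_ratio_X[OF v]
      by (rule ratio_mono[OF ge P0 rat]) (use u v uv in auto)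
  next
    fix y assume k: "B y + C y - B y * C y < 1"
    have e: "1 - (B y + C y - B y * C y) = A' y * C' y" unfolding A'_def C'_def by (simp add: algebra_simps)
    have "A' y * C' y > 0" using k e by linarith
    then have "P (A' y * C' y) = A' y" unfolding P_def using M_point[OF g] by auto
    then show "1 - P (1 - (B y + C y - B y * C y)) = B y" unfolding e A'_def by simp
  qed
qed

theorem proposition5:
  fixes lFX uFX lFY uFY FZ FX FY :: "real \<Rightarrow> real"
  assumes "pbox lFX uFX" and "pbox lFY uFY"
    and "distribution_function FZ"
    and "distribution_function FX" and "distribution_function FY"
    and "\<forall>x. lFX x \<le> FX x \<and> FX x \<le> uFX x"
    and "\<forall>x. lFY x \<le> FY x \<and> FY x \<le> uFY x"
  shows
    "((\<forall>x. lFX x * FZ x \<le> FX x * FZ x \<and> FX x * FZ x \<le> uFX x * FZ x) \<and>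
     (\<forall>x. lFY x * FZ x \<le> FY x * FZ x \<and> FY x * FZ x \<le> uFY x * FZ x) \<and>
     (\<forall>x. lFY x + FZ x - lFY x * FZ x \<le> FY x + FZ x - FY x * FZ x \<and>
          FY x + FZ x - FY x * FZ x \<le> uFY x + FZ x - uFY x * FZ x)) \<and>
    (\<exists>\<phi> \<psi> \<chi>. assoc_phi FX FZ \<phi> \<and> assoc_phi FY FZ \<psi> \<and> assoc_chi FY FZ \<chi> \<and>
       (\<forall>u\<in>{0..1}.
          (INF f\<in>{f. assoc_phi lFX FZ f}. f u) \<le> \<phi> u \<and> \<phi> u \<le> (SUP f\<in>{f. assoc_phi uFX FZ f}. f u) \<and>
          (INF f\<in>{f. assoc_phi lFY FZ f}. f u) \<le> \<psi> u \<and> \<psi> u \<le> (SUP f\<in>{f. assoc_phi uFY FZ f}. f u) \<and>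
          (INF f\<in>{f. assoc_chi lFY FZ f}. f u) \<le> \<chi> u \<and> \<chi> u \<le> (SUP f\<in>{f. assoc_chi uFY FZ f}. f u)))"
proof -
  note d = assms(1,2)[unfolded pbox_def]
  have dlX: "distribution_function lFX" and duX: "distribution_function uFX"
    and dlY: "distribution_function lFY" and duY: "distribution_function uFY" using d by auto
  have Z: "\<And>x. 0 \<le> FZ x \<and> FZ x \<le> 1" using assms(3) unfolding distribution_function_def by auto
  have part1: "((\<forall>x. lFX x * FZ x \<le> FX x * FZ x \<and> FX x * FZ x \<le> uFX x * FZ x) \<and>
     (\<forall>x. lFY x * FZ x \<le> FY x * FZ x \<and> FY x * FZ x \<le> uFY x * FZ x) \<and>
     (\<forall>x. lFY x + FZ x - lFY x * FZ x \<le> FY x + FZ x - FY x * FZ x \<and>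
          FY x + FZ x - FY x * FZ x \<le> uFY x + FZ x - uFY x * FZ x))"
  proof (intro conjI allI)
    fix x
    have z: "0 \<le> FZ x" "0 \<le> 1 - FZ x" using Z[of x] by auto
    show "lFX x * FZ x \<le> FX x * FZ x" using assms(6) z by (simp add: mult_right_mono)
    show "FX x * FZ x \<le> uFX x * FZ x" using assms(6) z by (simp add: mult_right_mono)
    show "lFY x * FZ x \<le> FY x * FZ x" using assms(7) z by (simp add: mult_right_mono)
    show "FY x * FZ x \<le> uFY x * FZ x" using assms(7) z by (simp add: mult_right_mono)
    have "lFY x * (1 - FZ x) \<le> FY x * (1 - FZ x)" using assms(7) z by (simp add: mult_right_mono)
    then show "lFY x + FZ x - lFY x * FZ x \<le> FY x + FZ x - FY x * FZ x" by (simp add: algebra_simps)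
    have "FY x * (1 - FZ x) \<le> uFY x * (1 - FZ x)" using assms(7) z by (simp add: mult_right_mono)
    then show "FY x + FZ x - FY x * FZ x \<le> uFY x + FZ x - uFY x * FZ x" by (simp add: algebra_simps)
  qed
  have gX: "good FX FZ" "good lFX FZ" "good uFX FZ"
    using df_good[OF assms(4,3)] df_good[OF dlX assms(3)] df_good[OF duX assms(3)] by auto
  have gY: "good FY FZ" "good lFY FZ" "good uFY FZ"
    using df_good[OF assms(5,3)] df_good[OF dlY assms(3)] df_good[OF duY assms(3)] by auto
  have gY': "good (\<lambda>y. 1 - FY y) (\<lambda>y. 1 - FZ y)" "good (\<lambda>y. 1 - lFY y) (\<lambda>y. 1 - FZ y)"
     "good (\<lambda>y. 1 - uFY y) (\<lambda>y. 1 - FZ y)"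
    using df_good'[OF assms(5,3)] df_good'[OF dlY assms(3)] df_good'[OF duY assms(3)] by auto
  have INFphi: "\<And>L u. distribution_function L \<Longrightarrow> u \<in> {0..1} \<Longrightarrow>
      (INF f\<in>{f. assoc_phi L FZ f}. f u) \<le> Mf L FZ u"
  proof -
    fix L :: "real \<Rightarrow> real" and u :: real assume L: "distribution_function L" and u: "u \<in> {0..1}"
    show "(INF f\<in>{f. assoc_phi L FZ f}. f u) \<le> Mf L FZ u"
    proof (rule cINF_lower)
      show "bdd_below ((\<lambda>f. f u) ` {f. assoc_phi L FZ f})"
        by (rule bdd_belowI[of _ 0]) (use u in \<open>auto simp: assoc_phi_def image_subset_iff\<close>)
      show "Mf L FZ \<in> {f. assoc_phi L FZ f}" using assoc_phi_M[OF L assms(3)] by simp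
    qed
  qed
  have SUPphi: "\<And>L u. distribution_function L \<Longrightarrow> u \<in> {0..1} \<Longrightarrow>
      Mf L FZ u \<le> (SUP f\<in>{f. assoc_phi L FZ f}. f u)"
  proof -
    fix L :: "real \<Rightarrow> real" and u :: real assume L: "distribution_function L" and u: "u \<in> {0..1}"
    show "Mf L FZ u \<le> (SUP f\<in>{f. assoc_phi L FZ f}. f u)"
    proof (rule cSUP_upper)
      show "bdd_above ((\<lambda>f. f u) ` {f. assoc_phi L FZ f})"
        by (rule bdd_aboveI[of _ 1]) (use u in \<open>auto simp: assoc_phi_def image_subset_iff\<close>)
      show "Mf L FZ \<in> {f. assoc_phi L FZ f}" using assoc_phi_M[OF L assms(3)] by simp
    qed
  qed
  have INFchi: "\<And>L u. distribution_function L \<Longrightarrow> u \<in> {0..1} \<Longrightarrow>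
      (INF f\<in>{f. assoc_chi L FZ f}. f u) \<le> Xf L FZ u"
  proof -
    fix L :: "real \<Rightarrow> real" and u :: real assume L: "distribution_function L" and u: "u \<in> {0..1}"
    show "(INF f\<in>{f. assoc_chi L FZ f}. f u) \<le> Xf L FZ u"
    proof (rule cINF_lower)
      show "bdd_below ((\<lambda>f. f u) ` {f. assoc_chi L FZ f})"
        by (rule bdd_belowI[of _ 0]) (use u in \<open>auto simp: assoc_chi_def image_subset_iff\<close>)
      show "Xf L FZ \<in> {f. assoc_chi L FZ f}" using assoc_chi_X[OF L assms(3)] by simp
    qed
  qed
  have SUPchi: "\<And>L u. distribution_function L \<Longrightarrow> u \<in> {0..1} \<Longrightarrow>
      Xf L FZ u \<le> (SUP f\<in>{f. assoc_chi L FZ f}. f u)"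
  proof -
    fix L :: "real \<Rightarrow> real" and u :: real assume L: "distribution_function L" and u: "u \<in> {0..1}"
    show "Xf L FZ u \<le> (SUP f\<in>{f. assoc_chi L FZ f}. f u)"
    proof (rule cSUP_upper)
      show "bdd_above ((\<lambda>f. f u) ` {f. assoc_chi L FZ f})"
        by (rule bdd_aboveI[of _ 1]) (use u in \<open>auto simp: assoc_chi_def image_subset_iff\<close>)
      show "Xf L FZ \<in> {f. assoc_chi L FZ f}" using assoc_chi_X[OF L assms(3)] by simp
    qed
  qed
  have part2: "\<forall>u\<in>{0..1}.
          (INF f\<in>{f. assoc_phi lFX FZ f}. f u) \<le> Mf FX FZ u \<and> Mf FX FZ u \<le> (SUP f\<in>{f. assoc_phi uFX FZ f}. f u) \<and>
          (INF f\<in>{f. assoc_phi lFY FZ f}. f u) \<le> Mf FY FZ u \<and> Mf FY FZ u \<le> (SUP f\<in>{f. assoc_phi uFY FZ f}. f u) \<and>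
          (INF f\<in>{f. assoc_chi lFY FZ f}. f u) \<le> Xf FY FZ u \<and> Xf FY FZ u \<le> (SUP f\<in>{f. assoc_chi uFY FZ f}. f u)"
  proof (intro ballI conjI)
    fix u :: real assume u: "u \<in> {0..1}"
    have u1: "0 \<le> u" "u \<le> 1" "0 \<le> 1 - u" "1 - u \<le> 1" using u by auto
    have "Mf lFX FZ u \<le> Mf FX FZ u" using M_monoA[OF gX(2) gX(1) _ u1(1,2)] assms(6) by auto
    then show "(INF f\<in>{f. assoc_phi lFX FZ f}. f u) \<le> Mf FX FZ u" using order_trans[OF INFphi[OF dlX u]] by blast
    have "Mf FX FZ u \<le> Mf uFX FZ u" using M_monoA[OF gX(1) gX(3) _ u1(1,2)] assms(6) by auto
    then show "Mf FX FZ u \<le> (SUP f\<in>{f. assoc_phi uFX FZ f}. f u)" using order_trans[OF _ SUPphi[OF duX u]] by blast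
    have "Mf lFY FZ u \<le> Mf FY FZ u" using M_monoA[OF gY(2) gY(1) _ u1(1,2)] assms(7) by auto
    then show "(INF f\<in>{f. assoc_phi lFY FZ f}. f u) \<le> Mf FY FZ u" using order_trans[OF INFphi[OF dlY u]] by blast
    have "Mf FY FZ u \<le> Mf uFY FZ u" using M_monoA[OF gY(1) gY(3) _ u1(1,2)] assms(7) by auto
    then show "Mf FY FZ u \<le> (SUP f\<in>{f. assoc_phi uFY FZ f}. f u)" using order_trans[OF _ SUPphi[OF duY u]] by blast
    have "Mf (\<lambda>y. 1 - FY y) (\<lambda>y. 1 - FZ y) (1 - u) \<le> Mf (\<lambda>y. 1 - lFY y) (\<lambda>y. 1 - FZ y) (1 - u)"
      using M_monoA[OF gY'(1) gY'(2) _ u1(3,4)] assms(7) by auto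
    then have "Xf lFY FZ u \<le> Xf FY FZ u" unfolding Xf_def by simp
    then show "(INF f\<in>{f. assoc_chi lFY FZ f}. f u) \<le> Xf FY FZ u" using order_trans[OF INFchi[OF dlY u]] by blast
    have "Mf (\<lambda>y. 1 - uFY y) (\<lambda>y. 1 - FZ y) (1 - u) \<le> Mf (\<lambda>y. 1 - FY y) (\<lambda>y. 1 - FZ y) (1 - u)"
      using M_monoA[OF gY'(3) gY'(1) _ u1(3,4)] assms(7) by auto
    then have "Xf FY FZ u \<le> Xf uFY FZ u" unfolding Xf_def by simp
    then show "Xf FY FZ u \<le> (SUP f\<in>{f. assoc_chi uFY FZ f}. f u)" using order_trans[OF _ SUPchi[OF duY u]] by blast
  qed
  have a1: "assoc_phi FX FZ (Mf FX FZ)" using assoc_phi_M[OF assms(4,3)] .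
  have a2: "assoc_phi FY FZ (Mf FY FZ)" using assoc_phi_M[OF assms(5,3)] .
  have a3: "assoc_chi FY FZ (Xf FY FZ)" using assoc_chi_X[OF assms(5,3)] .
  show ?thesis
    apply (rule conjI[OF part1])
    apply (rule exI[of _ "Mf FX FZ"], rule exI[of _ "Mf FY FZ"], rule exI[of _ "Xf FY FZ"])
    apply (rule conjI[OF a1], rule conjI[OF a2], rule conjI[OF a3])
    apply (rule part2)
    done
qed

end
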